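(* Let $(M,+)$ be an Abelian semigroup, $\mathcal A_0=\{\theta\in\mathbb N_0^n:\theta\le1\}$, $h:\mathcal A_0\to M$ and $\alpha\in\mathcal A_0$. If $1-\alpha$ is even, then $$\sum_{\mathrm{ev}\,\theta\le\alpha}h(1-\alpha+\theta)+\sum_{\mathrm{od}\,\beta\le1-\alpha}\ \sum_{\mathrm{ev}\,\theta\le\alpha+\beta}h(\theta)=\sum_{\mathrm{ev}\,\beta\le1-\alpha}\ \sum_{\mathrm{ev}\,\theta\le\alpha+\beta}h(\theta),$$ $$\sum_{\mathrm{od}\,\theta\le\alpha}h(1-\alpha+\theta)+\sum_{\mathrm{od}\,\beta\le1-\alpha}\ \sum_{\mathrm{od}\,\theta\le\alpha+\beta}h(\theta)=\sum_{\mathrm{ev}\,\beta\le1-\alpha}\ \sum_{\mathrm{od}\,\theta\le\alpha+\beta}h(\theta);$$ and if $1-\alpha$ is odd, then $$\sum_{\substack{\theta\ \mathrm{even}\\ 1-\alpha\le\theta\le1}}h(\theta)+\sum_{\mathrm{ev}\,\beta\le1-\alpha}\ \sum_{\mathrm{ev}\,\theta\le\alpha+\beta}h(\theta)=\sum_{\mathrm{od}\,\beta\le1-\alpha}\ \sum_{\mathrm{ev}\,\theta\le\alpha+\beta}h(\theta),$$ $$\sum_{\substack{\theta\ \mathrm{odd}\\ 1-\alpha\le\theta\le1}}h(\theta)+\sum_{\mathrm{ev}\,\beta\le1-\alpha}\ \sum_{\mathrm{od}\,\theta\le\alpha+\beta}h(\theta)=\sum_{\mathrm{od}\,\beta\le1-\alpha}\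 \sum_{\mathrm{od}\,\theta\le\alpha+\beta}h(\theta).$$
   Context: Inequalities between multiindices in $\mathbb N_0^n$ are componentwise; $|\theta|=\theta_1+\dots+\theta_n$; $0$ and $1$ denote $(0,\dots,0)$ and $(1,\dots,1)$. A multiindex $\theta$ with $0\le\theta\le1$ is even (odd) if $|\theta|$ is even (odd); in particular $0$ is even. $\sum_{\mathrm{ev}\,\theta\le\alpha}$ ($\sum_{\mathrm{od}\,\theta\le\alpha}$) denotes the sum over even (odd) $\theta$ with $\theta\le\alpha$. Empty sums and omitted terms are dropped from an expression (no zero element is assumed); an equality both of whose sides are empty is regarded as trivially true. *)

theory Defs
  imports Main
begin

text \<open>Multiindices in N_0^n are represented as functions nat \<Rightarrow> nat vanishing
outside {..<n}; the order is the pointwise (componentwise) order le_fun.\<close>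

definition mabs :: "nat \<Rightarrow> (nat \<Rightarrow> nat) \<Rightarrow> nat" where
  "mabs n \<theta> = (\<Sum>i<n. \<theta> i)"

definition mone :: "nat \<Rightarrow> nat \<Rightarrow> nat" where
  "mone n = (\<lambda>i. if i < n then 1 else 0)"

definition A0 :: "nat \<Rightarrow> (nat \<Rightarrow> nat) set" where
  "A0 n = {\<theta>. \<theta> \<le> mone n}"

definition mcompl :: "nat \<Rightarrow> (nat \<Rightarrow> nat) \<Rightarrow> nat \<Rightarrow> nat" where
  "mcompl n \<alpha> = (\<lambda>i. mone n i - \<alpha> i)"

definition madd :: "(nat \<Rightarrow> nat) \<Rightarrow> (nat \<Rightarrow> nat) \<Rightarrow> nat \<Rightarrow> nat" where
  "madd \<alpha> \<beta> = (\<lambda>i. \<alpha> i + \<beta> i)"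

definition ev_le :: "nat \<Rightarrow> (nat \<Rightarrow> nat) \<Rightarrow> (nat \<Rightarrow> nat) set" where
  "ev_le n \<alpha> = {\<theta>. \<theta> \<le> \<alpha> \<and> even (mabs n \<theta>)}"

definition od_le :: "nat \<Rightarrow> (nat \<Rightarrow> nat) \<Rightarrow> (nat \<Rightarrow> nat) set" where
  "od_le n \<alpha> = {\<theta>. \<theta> \<le> \<alpha> \<and> odd (mabs n \<theta>)}"

text \<open>Sums in an abelian semigroup (no zero): an empty sum is represented by None,
and None is neutral for the lifted addition, so "empty sums are dropped".\<close>
definition opl :: "'a::ab_semigroup_add option \<Rightarrow> 'a option \<Rightarrow> 'a option" where
  "opl x y = (case x of None \<Rightarrow> y | Some a \<Rightarrow> (case y of None \<Rightarrow> Some a | Some b \<Rightarrow> Some (a + b)))"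

definition psum :: "('b \<Rightarrow> 'a::ab_semigroup_add option) \<Rightarrow> 'b set \<Rightarrow> 'a option" where
  "psum f A = Finite_Set.fold (\<lambda>x acc. opl (f x) acc) None A"

definition hsum :: "('b \<Rightarrow> 'a::ab_semigroup_add) \<Rightarrow> 'b set \<Rightarrow> 'a option" where
  "hsum h A = psum (\<lambda>x. Some (h x)) A"

end

theory Submission
  imports Defs
begin

interpretation P: comm_monoid_set "opl :: 'a::ab_semigroup_add option \<Rightarrow> _" None
  apply unfold_locales
    apply (auto simp: opl_def ac_simps split: option.splits)
  done

lemma psum_eq: "psum f A = P.F f A"
  by (simp add: psum_def P.eq_fold comp_def)

lemma hsum_eq: "hsum h A = P.F (\<lambda>x. Some (h x)) A"
  by (simp add: hsum_def psum_eq)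

lemma fin_le: "finite {\<theta>::nat\<Rightarrow>nat. \<theta> \<le> mone n}"
proof (rule inj_on_finite[where f="\<lambda>\<theta>. {i. \<theta> i = 1}" and B="Pow {..<n}"])
  show "inj_on (\<lambda>\<theta>. {i. \<theta> i = 1}) {\<theta>. \<theta> \<le> mone n}"
  proof (rule inj_onI)
    fix x y :: "nat \<Rightarrow> nat" assume x: "x \<in> {\<theta>. \<theta> \<le> mone n}" and y: "y \<in> {\<theta>. \<theta> \<le> mone n}"
      and e: "{i. x i = 1} = {i. y i = 1}"
    show "x = y"
    proof
      fix i
      have "x i \<le> 1" "y i \<le> 1" using x y by (auto simp: le_fun_def mone_def split: if_splits)
      moreover have "x i = 1 \<longleftrightarrow> y i = 1" using e by blast
      ultimately show "x i = y i" by linarith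
    qed
  qed
  show "(\<lambda>\<theta>. {i. \<theta> i = 1}) ` {\<theta>. \<theta> \<le> mone n} \<subseteq> Pow {..<n}"
    by (auto simp: le_fun_def mone_def, metis nat.distinct(1))
qed auto

lemma fin_le2: "x \<le> mone n \<Longrightarrow> finite {\<theta>::nat\<Rightarrow>nat. \<theta> \<le> x \<and> P \<theta>}"
  by (rule finite_subset[OF _ fin_le[of n]]) (auto intro: order_trans)

lemma parity_flip:
  assumes "j < n" "\<beta> j \<le> 1"
  shows "even (mabs n (\<beta>(j := 1 - \<beta> j))) \<longleftrightarrow> \<not> even (mabs n \<beta>)"
proof -
  have r: "mabs n f = f j + (\<Sum>i\<in>{..<n}-{j}. f i)" for f
    unfolding mabs_def using assms(1) by (simp add: sum.remove)
  have s: "(\<Sum>i\<in>{..<n}-{j}. (\<beta>(j := 1 - \<beta> j)) i) = (\<Sum>i\<in>{..<n}-{j}. \<beta> i)"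
    by (rule sum.cong) auto
  show ?thesis using assms(2) unfolding r[of "\<beta>(j := 1 - \<beta> j)"] r[of \<beta>] s
    by (cases "\<beta> j") auto
qed


lemma core:
  fixes h :: "(nat \<Rightarrow> nat) \<Rightarrow> 'a::ab_semigroup_add"
  assumes a: "\<alpha> \<in> A0 n" and e: "even (mabs n (mcompl n \<alpha>)) = e"
  shows "opl (hsum h {\<theta>. \<theta> \<le> mone n \<and> Q (mabs n \<theta>) \<and> mcompl n \<alpha> \<le> \<theta>})
     (psum (\<lambda>\<beta>. hsum h {\<theta>. \<theta> \<le> madd \<alpha> \<beta> \<and> Q (mabs n \<theta>)}) {\<beta>. \<beta> \<le> mcompl n \<alpha> \<and> even (mabs n \<beta>) = (\<not> e)})
   = psum (\<lambda>\<beta>. hsum h {\<theta>. \<theta> \<le> madd \<alpha> \<beta> \<and> Q (mabs n \<theta>)}) {\<beta>. \<beta> \<le> mcompl n \<alpha> \<and> even (mabs n \<beta>) = e}"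
proof -
  define c where "c = mcompl n \<alpha>"
  define Ev where "Ev = {\<theta>. \<theta> \<le> mone n \<and> Q (mabs n \<theta>)}"
  define B where "B r = {\<beta>. \<beta> \<le> c \<and> even (mabs n \<beta>) = r}" for r
  have al: "\<alpha> i \<le> 1" "i \<ge> n \<Longrightarrow> \<alpha> i = 0" for i
    using a by (auto simp: A0_def le_fun_def mone_def split: if_splits) (metis le_zero_eq not_le)+
  have cI: "c i = (if i < n then 1 - \<alpha> i else 0)" for i
    by (simp add: c_def mcompl_def mone_def)
  have c1: "c \<le> mone n" by (auto simp: le_fun_def cI mone_def)
  have finEv: "finite Ev" unfolding Ev_def by (rule fin_le2[of "mone n" n]) simp
  have finB: "finite (B r)" for r unfolding B_def by (rule fin_le2[OF c1])
  have ab1: "\<beta> \<le> c \<Longrightarrow> madd \<alpha> \<beta> \<le> mone n" for \<beta>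
    unfolding le_fun_def
  proof (intro impI allI)
    fix i assume "\<forall>i. \<beta> i \<le> c i"
    then have "\<beta> i \<le> c i" by blast
    then show "madd \<alpha> \<beta> i \<le> mone n i" using al[of i] cI[of i]
      by (cases "i < n") (simp_all add: madd_def mone_def)
  qed
  have inner: "\<beta> \<in> B r \<Longrightarrow> {\<theta>. \<theta> \<le> madd \<alpha> \<beta> \<and> Q (mabs n \<theta>)} = {\<theta>\<in>Ev. madd \<alpha> \<beta> \<ge> \<theta>}" for \<beta> r
    using ab1[of \<beta>] by (auto simp: B_def Ev_def intro: order_trans)
  have S: "psum (\<lambda>\<beta>. hsum h {\<theta>. \<theta> \<le> madd \<alpha> \<beta> \<and> Q (mabs n \<theta>)}) (B r)
     = P.F (\<lambda>\<theta>. P.F (\<lambda>\<beta>. Some (h \<theta>)) {\<beta>. \<beta> \<in> B r \<and> \<theta> \<le> madd \<alpha> \<beta>}) Ev" for r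
  proof -
    have "psum (\<lambda>\<beta>. hsum h {\<theta>. \<theta> \<le> madd \<alpha> \<beta> \<and> Q (mabs n \<theta>)}) (B r)
        = P.F (\<lambda>\<beta>. P.F (\<lambda>\<theta>. Some (h \<theta>)) {\<theta>. \<theta> \<in> Ev \<and> madd \<alpha> \<beta> \<ge> \<theta>}) (B r)"
      unfolding psum_eq hsum_eq by (rule P.cong) (simp_all add: inner)
    also have "\<dots> = P.F (\<lambda>\<theta>. P.F (\<lambda>\<beta>. Some (h \<theta>)) {\<beta>. \<beta> \<in> B r \<and> \<theta> \<le> madd \<alpha> \<beta>}) Ev"
      by (rule P.swap_restrict[OF finB finEv])
    finally show ?thesis .
  qed
  have F1: "hsum h {\<theta>. \<theta> \<le> mone n \<and> Q (mabs n \<theta>) \<and> mcompl n \<alpha> \<le> \<theta>}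
     = P.F (\<lambda>\<theta>. if c \<le> \<theta> then Some (h \<theta>) else None) Ev"
  proof -
    have "{\<theta>. \<theta> \<le> mone n \<and> Q (mabs n \<theta>) \<and> mcompl n \<alpha> \<le> \<theta>} = {\<theta>\<in>Ev. c \<le> \<theta>}"
      by (auto simp: Ev_def c_def)
    then show ?thesis unfolding hsum_eq using P.inter_filter[OF finEv] by simp
  qed
  have pt: "opl (if c \<le> \<theta> then Some (h \<theta>) else None) (P.F (\<lambda>\<beta>. Some (h \<theta>)) {\<beta>. \<beta> \<in> B (\<not> e) \<and> \<theta> \<le> madd \<alpha> \<beta>})
      = P.F (\<lambda>\<beta>. Some (h \<theta>)) {\<beta>. \<beta> \<in> B e \<and> \<theta> \<le> madd \<alpha> \<beta>}" if th: "\<theta> \<in> Ev" for \<theta>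
  proof (cases "c \<le> \<theta>")
    case True
    have eqc: "\<beta> = c" if "\<beta> \<le> c" "\<theta> \<le> madd \<alpha> \<beta>" for \<beta>
    proof
      fix i
      have "\<beta> i \<le> c i" "c i \<le> \<theta> i" "\<theta> i \<le> \<alpha> i + \<beta> i"
        using that True by (auto simp: le_fun_def madd_def)
      then show "\<beta> i = c i" using al[of i] cI[of i] by (auto split: if_splits)
    qed
    have cin: "\<theta> \<le> madd \<alpha> c"
      using th al by (auto simp: Ev_def le_fun_def madd_def cI mone_def split: if_splits)
    have s1: "{\<beta>. \<beta> \<in> B r \<and> \<theta> \<le> madd \<alpha> \<beta>} = (if e = r then {c} else {})" for r
      using eqc cin e by (auto simp: B_def c_def)
    show ?thesis using True by (simp add: s1 opl_def)
  next
    case False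
    then obtain j where j: "\<not> c j \<le> \<theta> j" by (auto simp: le_fun_def)
    have jn: "j < n" and aj: "\<alpha> j = 0" and tj: "\<theta> j = 0"
      using j th al[of j] cI[of j] by (auto simp: Ev_def le_fun_def mone_def split: if_splits)
    define \<tau> where "\<tau> \<beta> = \<beta>(j := 1 - \<beta> j)" for \<beta> :: "nat \<Rightarrow> nat"
    have cj: "c j = 1" using cI[of j] jn aj by simp
    have key: "\<tau> \<beta> \<in> {\<beta>. \<beta> \<in> B (\<not> r) \<and> \<theta> \<le> madd \<alpha> \<beta>}"
      if "\<beta> \<in> {\<beta>. \<beta> \<in> B r \<and> \<theta> \<le> madd \<alpha> \<beta>}" for \<beta> r
    proof -
      have b: "\<beta> \<le> c" "even (mabs n \<beta>) = r" "\<theta> \<le> madd \<alpha> \<beta>" using that by (auto simp: B_def)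
      have bi: "\<beta> i \<le> c i" for i using b(1) by (simp add: le_fun_def)
      have bj: "\<beta> j \<le> 1" using bi[of j] cj by simp
      have "\<tau> \<beta> \<le> c" unfolding le_fun_def
      proof
        fix i show "\<tau> \<beta> i \<le> c i" using bi[of i] cj by (cases "i = j") (simp_all add: \<tau>_def)
      qed
      moreover have "even (mabs n (\<tau> \<beta>)) = (\<not> r)"
        using parity_flip[of j n \<beta>, OF jn bj] b(2) by (simp add: \<tau>_def)
      moreover have "\<theta> \<le> madd \<alpha> (\<tau> \<beta>)" unfolding le_fun_def
      proof
        fix i show "\<theta> i \<le> madd \<alpha> (\<tau> \<beta>) i" using b(3) tj
          by (cases "i = j") (simp_all add: \<tau>_def le_fun_def madd_def)
      qed
      ultimately show ?thesis by (simp add: B_def)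
    qed
    have inv: "\<tau> (\<tau> \<beta>) = \<beta>" if "\<beta> \<in> {\<beta>. \<beta> \<in> B r \<and> \<theta> \<le> madd \<alpha> \<beta>}" for \<beta> r
    proof -
      have "\<beta> j \<le> 1" proof -
        have "\<beta> \<le> c" using that by (simp add: B_def)
        then have "\<beta> j \<le> c j" by (simp add: le_fun_def)
        then show ?thesis using cj by simp
      qed
      then show ?thesis by (auto simp: \<tau>_def)
    qed
    have "P.F (\<lambda>\<beta>. Some (h \<theta>)) {\<beta>. \<beta> \<in> B (\<not> e) \<and> \<theta> \<le> madd \<alpha> \<beta>}
        = P.F (\<lambda>\<beta>. Some (h \<theta>)) {\<beta>. \<beta> \<in> B e \<and> \<theta> \<le> madd \<alpha> \<beta>}"
    proof (rule P.reindex_bij_witness[where i=\<tau> and j=\<tau>])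
      fix a assume "a \<in> {\<beta>. \<beta> \<in> B (\<not> e) \<and> \<theta> \<le> madd \<alpha> \<beta>}"
      then show "\<tau> (\<tau> a) = a" "\<tau> a \<in> {\<beta>. \<beta> \<in> B e \<and> \<theta> \<le> madd \<alpha> \<beta>}"
        using inv[of a "\<not> e"] key[of a "\<not> e"] by simp_all
    next
      fix a assume "a \<in> {\<beta>. \<beta> \<in> B e \<and> \<theta> \<le> madd \<alpha> \<beta>}"
      then show "\<tau> (\<tau> a) = a" "\<tau> a \<in> {\<beta>. \<beta> \<in> B (\<not> e) \<and> \<theta> \<le> madd \<alpha> \<beta>}"
        using inv[of a e] key[of a e] by simp_all
    qed simp
    then show ?thesis using False by (simp add: opl_def)
  qed
  have "opl (hsum h {\<theta>. \<theta> \<le> mone n \<and> Q (mabs n \<theta>) \<and> mcompl n \<alpha> \<le> \<theta>})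
     (psum (\<lambda>\<beta>. hsum h {\<theta>. \<theta> \<le> madd \<alpha> \<beta> \<and> Q (mabs n \<theta>)}) (B (\<not> e)))
     = psum (\<lambda>\<beta>. hsum h {\<theta>. \<theta> \<le> madd \<alpha> \<beta> \<and> Q (mabs n \<theta>)}) (B e)"
    unfolding F1 S P.distrib[symmetric] by (rule P.cong) (simp_all add: pt)
  then show ?thesis by (simp add: B_def c_def)
qed


lemma mabs_madd: "mabs n (madd a b) = mabs n a + mabs n b"
  by (simp add: mabs_def madd_def sum.distrib)

lemma reidx:
  fixes h :: "(nat \<Rightarrow> nat) \<Rightarrow> 'a::ab_semigroup_add"
  assumes a: "\<alpha> \<in> A0 n" and Qm: "\<And>k. Q (mabs n (mcompl n \<alpha>) + k) = Q k"
  shows "psum (\<lambda>\<theta>. Some (h (madd (mcompl n \<alpha>) \<theta>))) {\<theta>. \<theta> \<le> \<alpha> \<and> Q (mabs n \<theta>)}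
     = hsum h {\<theta>. \<theta> \<le> mone n \<and> Q (mabs n \<theta>) \<and> mcompl n \<alpha> \<le> \<theta>}"
proof -
  define c where "c = mcompl n \<alpha>"
  have al: "\<alpha> i \<le> 1" "i \<ge> n \<Longrightarrow> \<alpha> i = 0" for i
    using a by (auto simp: A0_def le_fun_def mone_def split: if_splits) (metis le_zero_eq not_le)+
  have cI: "c i = (if i < n then 1 - \<alpha> i else 0)" for i
    by (simp add: c_def mcompl_def mone_def)
  define d where "d \<theta> = (\<lambda>i. \<theta> i - c i)" for \<theta> :: "nat \<Rightarrow> nat"
  show ?thesis unfolding psum_eq hsum_eq c_def[symmetric]
  proof (rule P.reindex_bij_witness[where i=d and j="madd c"])
    fix a assume A: "a \<in> {\<theta>. \<theta> \<le> \<alpha> \<and> Q (mabs n \<theta>)}"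
    then have ai: "a i \<le> \<alpha> i" for i by (simp add: le_fun_def)
    show "d (madd c a) = a" by (simp add: d_def madd_def)
    have "madd c a \<le> mone n" unfolding le_fun_def
    proof
      fix i show "madd c a i \<le> mone n i" using ai[of i] al[of i] cI[of i]
        by (cases "i < n") (simp_all add: madd_def mone_def)
    qed
    moreover have "c \<le> madd c a" by (simp add: le_fun_def madd_def)
    moreover have "Q (mabs n (madd c a))" using A Qm by (simp add: mabs_madd c_def)
    ultimately show "madd c a \<in> {\<theta>. \<theta> \<le> mone n \<and> Q (mabs n \<theta>) \<and> c \<le> \<theta>}" by simp
  next
    fix b assume B: "b \<in> {\<theta>. \<theta> \<le> mone n \<and> Q (mabs n \<theta>) \<and> c \<le> \<theta>}"
    then have bi: "b i \<le> mone n i" "c i \<le> b i" for i by (simp_all add: le_fun_def)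
    have eqb: "madd c (d b) = b" by (rule ext) (simp add: d_def madd_def bi(2))
    then show "madd c (d b) = b" .
    have "d b \<le> \<alpha>" unfolding le_fun_def
    proof
      fix i show "d b i \<le> \<alpha> i" using bi[of i] al[of i] cI[of i]
        by (cases "i < n") (simp_all add: d_def mone_def)
    qed
    moreover have "Q (mabs n (d b))" using B Qm[of "mabs n (d b)"] eqb
      by (metis (mono_tags, lifting) c_def mabs_madd mem_Collect_eq)
    ultimately show "d b \<in> {\<theta>. \<theta> \<le> \<alpha> \<and> Q (mabs n \<theta>)}" by simp
  qed simp
qed

theorem lemma7:
  fixes n :: nat and h :: "(nat \<Rightarrow> nat) \<Rightarrow> 'a::ab_semigroup_add" and \<alpha> :: "nat \<Rightarrow> nat"
  assumes "\<alpha> \<in> A0 n"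
  shows "(even (mabs n (mcompl n \<alpha>)) \<longrightarrow>
      opl (psum (\<lambda>\<theta>. Some (h (madd (mcompl n \<alpha>) \<theta>))) (ev_le n \<alpha>))
          (psum (\<lambda>\<beta>. hsum h (ev_le n (madd \<alpha> \<beta>))) (od_le n (mcompl n \<alpha>)))
        = psum (\<lambda>\<beta>. hsum h (ev_le n (madd \<alpha> \<beta>))) (ev_le n (mcompl n \<alpha>))
    \<and> opl (psum (\<lambda>\<theta>. Some (h (madd (mcompl n \<alpha>) \<theta>))) (od_le n \<alpha>))
          (psum (\<lambda>\<beta>. hsum h (od_le n (madd \<alpha> \<beta>))) (od_le n (mcompl n \<alpha>)))
        = psum (\<lambda>\<beta>. hsum h (od_le n (madd \<alpha> \<beta>))) (ev_le n (mcompl n \<alpha>)))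
   \<and> (odd (mabs n (mcompl n \<alpha>)) \<longrightarrow>
      opl (hsum h {\<theta>. mcompl n \<alpha> \<le> \<theta> \<and> \<theta> \<le> mone n \<and> even (mabs n \<theta>)})
          (psum (\<lambda>\<beta>. hsum h (ev_le n (madd \<alpha> \<beta>))) (ev_le n (mcompl n \<alpha>)))
        = psum (\<lambda>\<beta>. hsum h (ev_le n (madd \<alpha> \<beta>))) (od_le n (mcompl n \<alpha>))
    \<and> opl (hsum h {\<theta>. mcompl n \<alpha> \<le> \<theta> \<and> \<theta> \<le> mone n \<and> odd (mabs n \<theta>)})
          (psum (\<lambda>\<beta>. hsum h (od_le n (madd \<alpha> \<beta>))) (ev_le n (mcompl n \<alpha>)))
        = psum (\<lambda>\<beta>. hsum h (od_le n (madd \<alpha> \<beta>))) (od_le n (mcompl n \<alpha>)))"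
proof (intro conjI impI)
  assume ev: "even (mabs n (mcompl n \<alpha>))"
  show "opl (psum (\<lambda>\<theta>. Some (h (madd (mcompl n \<alpha>) \<theta>))) (ev_le n \<alpha>))
          (psum (\<lambda>\<beta>. hsum h (ev_le n (madd \<alpha> \<beta>))) (od_le n (mcompl n \<alpha>)))
        = psum (\<lambda>\<beta>. hsum h (ev_le n (madd \<alpha> \<beta>))) (ev_le n (mcompl n \<alpha>))"
    using core[OF assms, of True h "\<lambda>k. even k"] reidx[OF assms, of "\<lambda>k. even k" h] ev
    by (simp add: ev_le_def od_le_def)
  show "opl (psum (\<lambda>\<theta>. Some (h (madd (mcompl n \<alpha>) \<theta>))) (od_le n \<alpha>))
          (psum (\<lambda>\<beta>. hsum h (od_le n (madd \<alpha> \<beta>))) (od_le n (mcompl n \<alpha>)))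
        = psum (\<lambda>\<beta>. hsum h (od_le n (madd \<alpha> \<beta>))) (ev_le n (mcompl n \<alpha>))"
    using core[OF assms, of True h "\<lambda>k. odd k"] reidx[OF assms, of "\<lambda>k. odd k" h] ev
    by (simp add: ev_le_def od_le_def)
next
  assume od: "odd (mabs n (mcompl n \<alpha>))"
  have s: "{\<theta>. mcompl n \<alpha> \<le> \<theta> \<and> \<theta> \<le> mone n \<and> Q (mabs n \<theta>)}
     = {\<theta>. \<theta> \<le> mone n \<and> Q (mabs n \<theta>) \<and> mcompl n \<alpha> \<le> \<theta>}" for Q by blast
  have s2: "{\<theta>. mcompl n \<alpha> \<le> \<theta> \<and> \<theta> \<le> mone n \<and> odd (mabs n \<theta>)}
     = {\<theta>. \<theta> \<le> mone n \<and> odd (mabs n \<theta>) \<and> mcompl n \<alpha> \<le> \<theta>}" by blast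
  show "opl (hsum h {\<theta>. mcompl n \<alpha> \<le> \<theta> \<and> \<theta> \<le> mone n \<and> even (mabs n \<theta>)})
          (psum (\<lambda>\<beta>. hsum h (ev_le n (madd \<alpha> \<beta>))) (ev_le n (mcompl n \<alpha>)))
        = psum (\<lambda>\<beta>. hsum h (ev_le n (madd \<alpha> \<beta>))) (od_le n (mcompl n \<alpha>))"
    using core[OF assms, of False h "\<lambda>k. even k"] od
    by (simp add: ev_le_def od_le_def s)
  show "opl (hsum h {\<theta>. mcompl n \<alpha> \<le> \<theta> \<and> \<theta> \<le> mone n \<and> odd (mabs n \<theta>)})
          (psum (\<lambda>\<beta>. hsum h (od_le n (madd \<alpha> \<beta>))) (ev_le n (mcompl n \<alpha>)))
        = psum (\<lambda>\<beta>. hsum h (od_le n (madd \<alpha> \<beta>))) (od_le n (mcompl n \<alpha>))"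
    using core[OF assms, of False h "\<lambda>k. odd k"] od
    by (simp add: ev_le_def od_le_def s2)
qed

end
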